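(* LCP-aware insertion sort, as described in the context, sorts any sequence of $n$ strings with common prefix length $\bar h$ and computes its LCP array $H$; it performs at most $L(H)+\frac{n(n-1)}{2}$ character comparisons and runs in $O(D+n^2)$ time.
   Context: Strings are zero-terminated finite sequences over a totally ordered alphabet, ordered lexicographically; $\mathrm{lcp}(s,t)$ is the length of their longest common prefix. For a sorted sequence $s_1\le\dots\le s_n$ its LCP array is $H=(\bot,h_2,\dots,h_n)$, $h_i=\mathrm{lcp}(s_{i-1},s_i)$, and $L(H)=\sum_{i\ge2}h_i$. $D$ is the distinguishing prefix size: the sum over the strings of the length of the shortest prefix not shared by any other string of the input ($D\ge L(H)$). LCP-aware insertion sort: for $j=1,\dots,n$ the string $x=s_j$ is inserted into the already sorted prefix $s_1,\dots,s_{j-1}$ (whose LCP array is maintained) by scanning positions from the right while shifting elements (and their LCP entries) one place to the right. The scan maintains $h'$, the known LCP of $x$ with the element $t$ immediately to its right in the final order so far (initially $h'=\bar h$, with no element to the right). At each step let $u$ be the next element to the left, with stored LCP $g=\mathrm{lcp}(u,t)$ ($t$ the element just passed). If there is no such $u$, insert $x$ at the front. If $g<h'$: $x>u$, so $x$ is inserted between $u$ and $t$, with LCP entries $\mathrm{lcp}(u,x)=g$ and $\mathrm{lcp}(x,t)=h'$. If $g>h'$: $x<u$ without character comparisons; $u$ is shifted right and the scan continues with $h'$ unchanged. If $g=h'$: characters of $x$ and $u$ are compared from position $h'+1$ on, increasing the common length $h''$ while they are equal and not the terminator; if then $x\ge u$, insert $x$ between $u$ and $t$ with LCP entries $h''$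 (to $u$) and the old $h'$ (to $t$); otherwise shift $u$ right and continue with $h':=h''$. Counting convention: each character comparison yielding equality counts one, and the final mismatch test together with the $\ge$ test counts one; no other comparisons are character comparisons. *)

theory Defs
  imports Main "HOL-Library.List_Lexorder" "HOL-Library.Option_ord"
begin

text \<open>A string is a list of characters over a linearly ordered alphabet 'a; the
 terminating zero is implicit. Character at (0-based) position k, with the
 terminator represented by None, which is smaller than every character
 (None < Some c, theory Option_ord).  The lexicographic order on strings is the
 library order of List_Lexorder (a proper prefix is smaller), which coincides
 with the order of zero-terminated strings.\<close>

definition chr :: "'a list \<Rightarrow> nat \<Rightarrow> 'a option" where
  "chr s k = (if k < length s then Some (s ! k) else None)"

definition term_str :: "'a list \<Rightarrow> 'a option list" where
  "term_str s = map Some s @ [None]"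

fun lcp :: "'a list \<Rightarrow> 'a list \<Rightarrow> nat" where
  "lcp (a # as) (b # bs) = (if a = b then Suc (lcp as bs) else 0)"
| "lcp _ _ = 0"

definition LH :: "'a list list \<Rightarrow> nat" where
  "LH A = (\<Sum>i\<in>{1..<length A}. lcp (A ! (i - 1)) (A ! i))"

text \<open>If the string occurs more than once no such prefix exists; then the whole
 terminated string (length + 1) is taken.\<close>
definition dist_prefix :: "'a list list \<Rightarrow> nat \<Rightarrow> nat" where
  "dist_prefix ss i = (LEAST k. k = length (ss ! i) + 1 \<or>
      (\<forall>j < length ss. j \<noteq> i \<longrightarrow>
          take k (term_str (ss ! i)) \<noteq> take k (term_str (ss ! j))))"

definition D :: "'a list list \<Rightarrow> nat" where
  "D ss = (\<Sum>i<length ss. dist_prefix ss i)"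

function ext :: "'a list \<Rightarrow> 'a list \<Rightarrow> nat \<Rightarrow> nat" where
  "ext x u k = (if chr x k = chr u k \<and> chr x k \<noteq> None then ext x u (Suc k) else k)"
  by pat_completeness auto
termination
  by (relation "measure (\<lambda>(x, u, k). length x - k)") (auto simp: chr_def split: if_splits)

text \<open>Stored LCP of A!(i-1) with the element t to its right (position i of the
 current sorted prefix A with LCP array H, where H!0 is a dummy). When there is no
 element to the right (i = length A) the stored value is the common prefix length
 hb, so that the first step always performs the character comparison.\<close>
definition gval :: "'a list list \<Rightarrow> nat list \<Rightarrow> nat \<Rightarrow> nat \<Rightarrow> nat" where
  "gval A H hb i = (if i = length A then hb else H ! i)"

text \<open>scan A H hb x i h': the scan is at the gap before position i (the element t
 just passed is A!i, if it exists), h' is the known LCP of x with t.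
 Result: (insertion position, LCP to left neighbour (dummy 0 at front),
 LCP to right neighbour, number of character comparisons, number of scan steps).\<close>
definition add_cost :: "nat \<Rightarrow> nat \<Rightarrow> nat \<times> nat \<times> nat \<times> nat \<times> nat
       \<Rightarrow> nat \<times> nat \<times> nat \<times> nat \<times> nat" where
  "add_cost c s r = (case r of (p, l, rr, c', s') \<Rightarrow> (p, l, rr, c' + c, s' + s))"

primrec scan :: "'a::linorder list list \<Rightarrow> nat list \<Rightarrow> nat \<Rightarrow> 'a list \<Rightarrow> nat \<Rightarrow> nat
             \<Rightarrow> nat \<times> nat \<times> nat \<times> nat \<times> nat" where
  "scan A H hb x 0 h' = (0, 0, h', 0, 1)"
| "scan A H hb x (Suc i) h' =
     (if gval A H hb (Suc i) < h' then (Suc i, gval A H hb (Suc i), h', 0, 1)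
      else if h' < gval A H hb (Suc i) then add_cost 0 1 (scan A H hb x i h')
      else if chr x (ext x (A ! i) h') \<ge> chr (A ! i) (ext x (A ! i) h')
      then (Suc i, ext x (A ! i) h', h', ext x (A ! i) h' - h' + 1, 1)
      else add_cost (ext x (A ! i) h' - h' + 1) 1 (scan A H hb x i (ext x (A ! i) h')))"

text \<open>Insert x into the sorted prefix (A, H); cost = character comparisons,
 time = comparisons + scan steps (each scan step, i.e. each shifted/inspected
 element, costs one unit) + one unit per insertion.\<close>
definition insert_step :: "nat \<Rightarrow> 'a::linorder list
       \<Rightarrow> 'a list list \<times> nat list \<times> nat \<times> nat \<Rightarrow> 'a list list \<times> nat list \<times> nat \<times> nat" where
  "insert_step hb x st = (case st of (A, H, c, t) \<Rightarrow>
     (case scan A H hb x (length A) hb of (p, l, r, c', s) \<Rightarrow>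
       (take p A @ [x] @ drop p A,
        (if p = length A then H @ [l] else take p H @ [l, r] @ drop (Suc p) H),
        c + c',
        t + c' + s + 1)))"

text \<open>Runs insertion sort for j = 1..n; returns the sorted sequence, its LCP
 array (None = bottom at the first position), the number of character comparisons
 and the running time.\<close>
definition lcp_isort :: "nat \<Rightarrow> 'a::linorder list list
       \<Rightarrow> 'a list list \<times> nat option list \<times> nat \<times> nat" where
  "lcp_isort hb ss = (case fold (insert_step hb) ss ([], [], 0, 0) of (A, H, c, t) \<Rightarrow>
      (A, (case H of [] \<Rightarrow> [] | _ # H' \<Rightarrow> None # map Some H'), c, t))"

end

theory Submission
  imports Defs "HOL-Combinatorics.List_Permutation"
begin

declare ext.simps[simp del]

lemma lcp_sym: "lcp a b = lcp b a"
  by (induction a b rule: lcp.induct) auto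

lemma lcp_le: "lcp a b \<le> length a"
  by (induction a b rule: lcp.induct) auto

lemma lcp_self: "lcp a a = length a"
  by (induction a) auto

lemma chr_Cons: "chr (y # ys) (Suc k) = chr ys k" "chr (y#ys) 0 = Some y" "chr [] k = None"
  by (auto simp: chr_def)

lemma chr0_None: "chr s 0 = None \<longleftrightarrow> s = []"
  by (cases s) (auto simp: chr_def)

lemma chr0_None': "None = chr s 0 \<longleftrightarrow> s = []"
  by (cases s) (auto simp: chr_def)

lemma lcp_below: "j < lcp a b \<Longrightarrow> chr a j = chr b j \<and> chr a j \<noteq> None"
proof (induction a b arbitrary: j rule: lcp.induct)
  case (1 a as b bs)
  show ?case
  proof (cases j)
    case 0 thus ?thesis using 1 by (auto simp: chr_Cons split: if_splits)
  next
    case (Suc j')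
    have ab: "a = b" and "j' < lcp as bs" using 1(2) Suc by (auto split: if_splits)
    thus ?thesis using 1(1)[OF ab \<open>j' < lcp as bs\<close>] Suc by (metis chr_Cons(1))
  qed
qed auto

lemma lcp_at: "chr a (lcp a b) \<noteq> chr b (lcp a b) \<or> chr a (lcp a b) = None"
  by (induction a b rule: lcp.induct) (auto simp: chr_Cons)

lemma lcp_at_eq: "chr a (lcp a b) = chr b (lcp a b) \<Longrightarrow> a = b"
  by (induction a b rule: lcp.induct) (auto simp: chr_Cons chr0_None chr0_None' split: if_splits)

lemma lcp_ge: "(\<And>j. j < k \<Longrightarrow> chr a j = chr b j \<and> chr a j \<noteq> None) \<Longrightarrow> k \<le> lcp a b"
proof (induction a b arbitrary: k rule: lcp.induct)
  case (1 a as b bs)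
  show ?case
  proof (cases k)
    case (Suc k')
    have "chr (a#as) 0 = chr (b#bs) 0" using 1(2)[of 0] Suc by auto
    hence ab: "a = b" by (simp add: chr_Cons)
    have "\<And>j. j < k' \<Longrightarrow> chr as j = chr bs j \<and> chr as j \<noteq> None"
      using 1(2)[of "Suc _"] Suc by (metis Suc_mono chr_Cons(1))
    hence "k' \<le> lcp as bs" using 1(1)[OF ab] by blast
    thus ?thesis using Suc ab by simp
  qed simp
next
  case ("2_1" bs)
  thus ?case by (cases k) (auto simp: chr_Cons)
next
  case ("2_2" as)
  thus ?case by (cases k) (simp, metis chr_Cons(3) zero_less_Suc)
qed

lemma lcp_tri: "min (lcp a b) (lcp b c) \<le> lcp a c"
proof (rule lcp_ge)
  fix j assume "j < min (lcp a b) (lcp b c)"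
  thus "chr a j = chr c j \<and> chr a j \<noteq> None" using lcp_below[of j a b] lcp_below[of j b c] by (metis min_less_iff_conj)
qed

lemma lcp_less_iff: "a < b \<longleftrightarrow> chr a (lcp a b) < chr b (lcp a b)"
proof (induction a b rule: lcp.induct)
  case (1 a as b bs)
  show ?case
  proof (cases "a = b")
    case True thus ?thesis using 1 by (simp add: chr_Cons)
  next
    case False thus ?thesis by (simp add: chr_Cons)
  qed
next
  case ("2_1" bs) thus ?case by (cases bs) (simp_all add: chr_Cons)
next
  case ("2_2" as) thus ?case by (cases as) (simp_all add: chr_Cons)
qed

lemma lcp_mid:
  fixes a b c :: "'a::linorder list"
  assumes "a \<le> b" "b \<le> c" shows "lcp a c = min (lcp a b) (lcp b c)"
proof (rule antisym[OF _ lcp_tri])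
  show "lcp a c \<le> min (lcp a b) (lcp b c)"
  proof (rule ccontr)
    assume h: "\<not> ?thesis"
    define m where "m = min (lcp a b) (lcp b c)"
    have "m < lcp a c" using h unfolding m_def by linarith
    hence ac: "chr a m = chr c m" "chr a m \<noteq> None" using lcp_below[of m a c] by blast+
    show False
    proof (cases "lcp a b \<le> lcp b c")
      case True
      hence mab: "m = lcp a b" using m_def by simp
      have "chr a m \<noteq> chr b m" using lcp_at[of a b] ac mab by auto
      hence "a \<noteq> b" by auto
      hence "chr a m < chr b m" using assms(1) lcp_less_iff[of a b] mab by auto
      moreover have "chr b m \<le> chr c m"
      proof (cases "m < lcp b c")
        case True thus ?thesis using lcp_below[of m b c] by simp
      next
        case False
        hence "m = lcp b c" using mab \<open>lcp a b \<le> lcp b c\<close> by simp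
        thus ?thesis using assms(2) lcp_less_iff[of b c] by (cases "b = c") auto
      qed
      ultimately show False using ac by simp
    next
      case False
      hence mbc: "m = lcp b c" using m_def by simp
      have "chr b m \<noteq> chr c m" using lcp_at[of b c] ac mbc lcp_below[of m a b] False
        by auto
      hence "b \<noteq> c" by auto
      hence "chr b m < chr c m" using assms(2) lcp_less_iff[of b c] mbc by auto
      moreover have "chr a m = chr b m" using lcp_below[of m a b] mbc False by auto
      ultimately show False using ac by simp
    qed
  qed
qed

lemma ext_lcp: "k \<le> lcp x u \<Longrightarrow> ext x u k = lcp x u"
proof (induction x u k rule: ext.induct)
  case (1 x u k)
  show ?case
  proof (cases "k = lcp x u")
    case True
    thus ?thesis using lcp_at[of x u] by (subst ext.simps) (auto simp del: ext.simps)
  next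
    case False
    hence "k < lcp x u" using 1(2) by simp
    hence e: "chr x k = chr u k \<and> chr x k \<noteq> None" using lcp_below[of k x u] by blast
    have "ext x u (Suc k) = lcp x u" using 1(1)[OF e] \<open>k < lcp x u\<close> by simp
    thus ?thesis using e by (subst ext.simps) (metis (full_types))
  qed
qed


lemma le_iff_chr:
  fixes x u :: "'a::linorder list"
  shows "u \<le> x \<longleftrightarrow> chr u (lcp x u) \<le> chr x (lcp x u)"
  using lcp_less_iff[of x u] by auto

definition Pscan where
 "Pscan A hb x i h' res = (case res of (p,l,r,c',s) \<Rightarrow> p \<le> i \<and> (\<forall>k<p. A!k \<le> x)
     \<and> (\<forall>k. p \<le> k \<and> k < length A \<longrightarrow> x < A!k)
     \<and> (0<p \<longrightarrow> l = lcp (A!(p-1)) x) \<and> (p=0 \<longrightarrow> l = 0) \<and> (p < length A \<longrightarrow> r = lcp x (A!p))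
     \<and> (p = length A \<longrightarrow> r = hb) \<and> c' + h' \<le> i + max l r \<and> s \<le> i+1)"

lemma scan_correct:
  fixes A :: "'a::linorder list list"
  assumes srt: "sorted A"
    and Hok: "\<forall>k. 0<k \<and> k<length A \<longrightarrow> H!k = lcp (A!(k-1)) (A!k)"
    and hx: "\<forall>a\<in>set A. hb \<le> lcp x a"
  shows "i \<le> length A \<Longrightarrow> (i < length A \<longrightarrow> h' = lcp x (A!i) \<and> x < A!i) \<Longrightarrow> (i = length A \<longrightarrow> h' = hb) \<Longrightarrow>
     Pscan A hb x i h' (scan A H hb x i h')"
proof (induction i arbitrary: h')
  case 0
  have "\<forall>k. 0 \<le> k \<and> k < length A \<longrightarrow> x < A!k"
  proof (intro allI impI)
    fix k assume k: "0 \<le> k \<and> k < length A"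
    hence "A!0 \<le> A!k" using srt by (simp add: sorted_nth_mono)
    thus "x < A!k" using 0 k by auto
  qed
  thus ?case using 0 by (auto simp: Pscan_def)
next
  case (Suc i)
  define u where "u = A!i"
  define g where "g = gval A H hb (Suc i)"
  have iA: "i < length A" using Suc by simp
  have uA: "u \<in> set A" using iA u_def by simp
  have xge: "\<forall>k. Suc i \<le> k \<and> k < length A \<longrightarrow> x < A!k"
  proof (intro allI impI)
    fix k assume k: "Suc i \<le> k \<and> k < length A"
    hence "A!(Suc i) \<le> A!k" using srt by (simp add: sorted_nth_mono)
    thus "x < A!k" using Suc.prems k by auto
  qed
  have ule: "\<forall>k<Suc i. A!k \<le> u" using srt iA u_def by (auto simp: sorted_nth_mono)
  have mid: "Suc i < length A \<Longrightarrow> g = lcp u (A!Suc i) \<and> h' = lcp x (A!Suc i) \<and> x < A!Suc i \<and> u \<le> A!Suc i"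
    using Suc.prems Hok srt unfolding g_def gval_def u_def by (auto simp: sorted_nth_mono)
  have top: "Suc i = length A \<Longrightarrow> g = hb \<and> h' = hb" using Suc.prems unfolding g_def gval_def by simp
  show ?case
  proof (cases "g < h'")
    case True
    hence sA: "Suc i < length A" using top Suc.prems(1) by fastforce
    define t where "t = A!Suc i"
    have m: "g = lcp u t" "h' = lcp x t" "x < t" "u \<le> t" using mid[OF sA] t_def by auto
    have ux: "u < x"
    proof (rule ccontr)
      assume "\<not> u < x"
      hence "x \<le> u" by simp
      hence "lcp x t = min (lcp x u) (lcp u t)" using lcp_mid[of x u t] m by simp
      thus False using True m by simp
    qed
    have "lcp u t = min (lcp u x) (lcp x t)" using lcp_mid[of u x t] ux m by simp
    hence gl: "g = lcp u x" using True m by simp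
    have res: "scan A H hb x (Suc i) h' = (Suc i, g, h', 0, 1)" using True by (simp add: g_def)
    have kx: "\<forall>k<Suc i. A!k \<le> x" using ule ux by (meson less_imp_le order.trans)
    show ?thesis unfolding res Pscan_def prod.case
    proof (intro conjI)
      show "\<forall>k<Suc i. A!k \<le> x" by (rule kx)
      show "\<forall>k. Suc i \<le> k \<and> k < length A \<longrightarrow> x < A!k" by (rule xge)
      show "0 < Suc i \<longrightarrow> g = lcp (A ! (Suc i - 1)) x" using gl u_def by simp
      show "Suc i < length A \<longrightarrow> h' = lcp x (A ! Suc i)" using m t_def by simp
      show "Suc i = length A \<longrightarrow> h' = hb" using sA by simp
    qed simp_all
  next
    case False
    note F1 = False
    show ?thesis
    proof (cases "h' < g")
      case True
      hence sA: "Suc i < length A" using top Suc.prems(1) by fastforce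
      define t where "t = A!Suc i"
      have m: "g = lcp u t" "h' = lcp x t" "x < t" "u \<le> t" using mid[OF sA] t_def by auto
      have xu: "x < u"
      proof (rule ccontr)
        assume "\<not> x < u"
        hence "u \<le> x" by simp
        hence "lcp u t = min (lcp u x) (lcp x t)" using lcp_mid[of u x t] m by simp
        thus False using True m by simp
      qed
      have "lcp x t = min (lcp x u) (lcp u t)" using lcp_mid[of x u t] xu m by simp
      hence hl: "h' = lcp x u" using True m by simp
      have IH: "Pscan A hb x i h' (scan A H hb x i h')"
        using Suc.IH[of h'] iA hl xu u_def by simp
      have res: "scan A H hb x (Suc i) h' = add_cost 0 1 (scan A H hb x i h')"
        using True F1 by (simp add: g_def)
      obtain p l r c s where e: "scan A H hb x i h' = (p,l,r,c,s)" by (cases "scan A H hb x i h'")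
      show ?thesis unfolding res e using IH e by (simp add: Pscan_def add_cost_def)
    next
      case False
      hence gh: "g = h'" using F1 by simp
      have hle: "h' \<le> lcp x u"
      proof (cases "Suc i = length A")
        case True thus ?thesis using top hx uA by auto
      next
        case False
        hence sA: "Suc i < length A" using Suc.prems by simp
        define t where "t = A!Suc i"
        have m: "g = lcp u t" "h' = lcp x t" using mid[OF sA] t_def by auto
        show ?thesis using lcp_tri[of x t u] m gh lcp_sym[of u t] by simp
      qed
      define e where "e = ext x u h'"
      have ee: "e = lcp x u" using ext_lcp[OF hle] e_def by simp
      show ?thesis
      proof (cases "chr x e \<ge> chr u e")
        case True
        have res: "scan A H hb x (Suc i) h' = (Suc i, e, h', e - h' + 1, 1)"
          using True gh by (simp add: g_def e_def u_def)
        have ux: "u \<le> x" using True le_iff_chr[of u x] ee by simp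
        have r: "Suc i < length A \<Longrightarrow> h' = lcp x (A!Suc i)" using mid by blast
        have kx: "\<forall>k<Suc i. A!k \<le> x" using ule ux by (meson order.trans)
        show ?thesis unfolding res Pscan_def prod.case
        proof (intro conjI)
          show "\<forall>k<Suc i. A!k \<le> x" by (rule kx)
          show "\<forall>k. Suc i \<le> k \<and> k < length A \<longrightarrow> x < A!k" by (rule xge)
          show "0 < Suc i \<longrightarrow> e = lcp (A ! (Suc i - 1)) x" using ee u_def lcp_sym[of x u] by simp
          show "Suc i < length A \<longrightarrow> h' = lcp x (A ! Suc i)" using r by simp
          show "Suc i = length A \<longrightarrow> h' = hb" using top by simp
          show "e - h' + 1 + h' \<le> Suc i + max e h'" using hle ee by simp
        qed simp_all
      next
        case False
        have res: "scan A H hb x (Suc i) h' = add_cost (e - h' + 1) 1 (scan A H hb x i e)"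
          using False gh by (simp add: g_def e_def u_def)
        have xu: "x < u" using False le_iff_chr[of u x] ee by auto
        have IH: "Pscan A hb x i e (scan A H hb x i e)"
          using Suc.IH[of e] iA ee xu u_def by simp
        obtain p l r c s where es: "scan A H hb x i e = (p,l,r,c,s)" by (cases "scan A H hb x i e")
        show ?thesis unfolding res es using IH es hle ee by (simp add: Pscan_def add_cost_def)
      qed
    qed
  qed
qed


fun LHr :: "'a list list \<Rightarrow> nat" where
  "LHr (a # b # xs) = lcp a b + LHr (b # xs)"
| "LHr _ = 0"

lemma LH_Cons2: "LH (a # b # xs) = lcp a b + LH (b # xs)"
proof -
  have "LH (a # b # xs) = (\<Sum>i\<in>{1..<Suc (Suc (length xs))}. lcp ((a#b#xs) ! (i - 1)) ((a#b#xs) ! i))"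
    by (simp add: LH_def)
  also have "\<dots> = lcp a b + (\<Sum>i\<in>{Suc 1..<Suc (Suc (length xs))}. lcp ((a#b#xs) ! (i - 1)) ((a#b#xs) ! i))"
    by (subst sum.atLeast_Suc_lessThan) simp_all
  also have "(\<Sum>i\<in>{Suc 1..<Suc (Suc (length xs))}. lcp ((a#b#xs) ! (i - 1)) ((a#b#xs) ! i))
       = (\<Sum>i\<in>{1..<Suc (length xs)}. lcp ((a#b#xs) ! (Suc i - 1)) ((a#b#xs) ! Suc i))"
    by (rule sum.shift_bounds_Suc_ivl)
  also have "\<dots> = (\<Sum>i\<in>{1..<Suc (length xs)}. lcp ((b#xs) ! (i - 1)) ((b#xs) ! i))"
    by (rule sum.cong) (auto simp: nth_Cons')
  also have "\<dots> = LH (b # xs)" by (simp add: LH_def)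
  finally show ?thesis .
qed

lemma LH_eq: "LH A = LHr A"
proof (induction A rule: LHr.induct)
  case (1 a b xs) thus ?case by (simp only: LH_Cons2 LHr.simps)
qed (simp_all add: LH_def)

lemma LHr_mid: "LHr (xs @ y # ys) = LHr (xs @ [y]) + LHr (y # ys)"
  by (induction xs rule: LHr.induct) auto

lemma LHr_snoc: "LHr (xs @ [y]) = LHr xs + (if xs = [] then 0 else lcp (last xs) y)"
  by (induction xs rule: LHr.induct) auto

lemma LHr_Cons: "LHr (y # ys) = LHr ys + (if ys = [] then 0 else lcp y (hd ys))"
  by (cases ys) auto

lemma nth_ins: "p \<le> length A \<Longrightarrow> k \<le> length A \<Longrightarrow>
   (take p A @ x # drop p A) ! k = (if k < p then A!k else if k = p then x else A!(k-1))"
  by (auto simp: nth_append min_def nth_Cons' )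


lemma LHr_ins:
  assumes "p \<le> length A"
  shows "LHr (take p A @ x # drop p A) + (if 0<p \<and> p<length A then lcp (A!(p-1)) (A!p) else 0)
     = LHr A + (if 0<p then lcp (A!(p-1)) x else 0) + (if p < length A then lcp x (A!p) else 0)"
proof -
  define T where "T = take p A"
  define R where "R = drop p A"
  have A: "A = T @ R" by (simp add: T_def R_def)
  have T0: "T \<noteq> [] \<longleftrightarrow> 0 < p" using assms by (auto simp: T_def)
  have R0: "R \<noteq> [] \<longleftrightarrow> p < length A" using assms by (auto simp: R_def)
  have lT: "0 < p \<Longrightarrow> last T = A!(p-1)" unfolding T_def
    by (subst last_conv_nth) (use assms in \<open>auto simp: min_def\<close>)
  have hR: "p < length A \<Longrightarrow> hd R = A!p" by (simp add: R_def hd_drop_conv_nth)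
  have e1: "LHr (T @ x # R) = LHr T + (if T = [] then 0 else lcp (last T) x) + LHr R
       + (if R = [] then 0 else lcp x (hd R))"
    by (subst LHr_mid) (simp add: LHr_snoc LHr_Cons)
  have e2: "LHr (T @ R) = LHr T + LHr R + (if T \<noteq> [] \<and> R \<noteq> [] then lcp (last T) (hd R) else 0)"
  proof (cases R)
    case Nil thus ?thesis by simp
  next
    case (Cons d R')
    thus ?thesis using LHr_mid[of T d R'] by (simp add: LHr_snoc LHr_Cons)
  qed
  show ?thesis
    using e1 e2 T0 R0 lT hR unfolding T_def[symmetric] R_def[symmetric] A[symmetric]
    by (cases "0 < p"; cases "p < length A") simp_all
qed

definition Inv :: "'a::linorder list list \<Rightarrow> 'a list list \<times> nat list \<times> nat \<times> nat \<Rightarrow> bool" where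
 "Inv xs st = (case st of (A, H, c, t) \<Rightarrow> sorted A \<and> mset A = mset xs \<and> length H = length A
    \<and> (\<forall>k. 0<k \<and> k<length A \<longrightarrow> H!k = lcp (A!(k-1)) (A!k))
    \<and> 2*c \<le> 2*LHr A + length A * (length A - 1)
    \<and> 2*t \<le> 2*c + length A * (length A - 1) + 4 * length A)"

lemma sq_step: "n * (n - 1) + 2 * n = Suc n * (Suc n - 1)"
  by (cases n) simp_all

lemma arith1: "2*c \<le> 2*L + Q \<Longrightarrow> c' + hb \<le> n + M \<Longrightarrow> L + M \<le> L' + hb
       \<Longrightarrow> Q + 2*n = Q' \<Longrightarrow> 2*(c+c') \<le> 2*L' + (Q'::nat)" by (simp add: algebra_simps)

lemma arith2: "2*t \<le> 2*c + Q + 4 * n \<Longrightarrow> s \<le> n + 1 \<Longrightarrow> Q + 2*n = Q'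
       \<Longrightarrow> 2*(t + c' + s + 1) \<le> 2*(c + c') + Q' + 4 * Suc (n::nat)" by (simp add: algebra_simps)

lemma step_inv:
  fixes x :: "'a::linorder list"
  assumes inv: "Inv xs (A, H, c, t)" and hx: "\<forall>a\<in>set A. hb \<le> lcp x a"
  shows "Inv (xs @ [x]) (insert_step hb x (A, H, c, t))"
proof -
  define n where "n = length A"
  have srt: "sorted A" and ms: "mset A = mset xs" and lH: "length H = n"
    and Hok: "\<forall>k. 0<k \<and> k<length A \<longrightarrow> H!k = lcp (A!(k-1)) (A!k)"
    and cI: "2*c \<le> 2*LHr A + n * (n - 1)"
    and tI: "2*t \<le> 2*c + n * (n - 1) + 4 * n"
    using inv by (auto simp: Inv_def n_def)
  obtain p l r c' s where sc: "scan A H hb x (length A) hb = (p, l, r, c', s)"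
    by (cases "scan A H hb x (length A) hb")
  have P: "Pscan A hb x (length A) hb (p, l, r, c', s)"
    using scan_correct[OF srt Hok hx, of "length A" hb] sc by simp
  hence pn: "p \<le> n" and before: "\<forall>k<p. A!k \<le> x" and after: "\<forall>k. p \<le> k \<and> k < n \<longrightarrow> x < A!k"
    and lp: "0 < p \<longrightarrow> l = lcp (A!(p-1)) x" and l0: "p = 0 \<longrightarrow> l = 0"
    and rp: "p < n \<longrightarrow> r = lcp x (A!p)" and rn: "p = n \<longrightarrow> r = hb"
    and cc: "c' + hb \<le> n + max l r" and ss: "s \<le> n + 1"
    unfolding Pscan_def n_def by auto
  define A' where "A' = take p A @ x # drop p A"
  define H' where "H' = (if p = length A then H @ [l] else take p H @ [l, r] @ drop (Suc p) H)"
  have res: "insert_step hb x (A, H, c, t) = (A', H', c + c', t + c' + s + 1)"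
    unfolding insert_step_def using sc by (simp add: A'_def H'_def)
  have lA': "length A' = Suc n" using pn by (simp add: A'_def n_def)
  have nthA': "\<And>k. k \<le> n \<Longrightarrow> A'!k = (if k < p then A!k else if k = p then x else A!(k-1))"
    unfolding A'_def n_def by (rule nth_ins) (use pn n_def in simp_all)
  have srt': "sorted A'"
    unfolding sorted_iff_nth_mono_less
  proof (intro allI impI)
    fix i j assume ij: "i < j" "j < length A'"
    hence jn: "j \<le> n" "i \<le> n" using lA' by auto
    have mono: "\<And>a b. a \<le> b \<Longrightarrow> b < n \<Longrightarrow> A!a \<le> A!b" using srt n_def by (simp add: sorted_nth_mono)
    show "A'!i \<le> A'!j"
    proof (cases "j < p")
      case True thus ?thesis using ij mono pn unfolding nthA'[OF jn(1)] nthA'[OF jn(2)] by simp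
    next
      case False
      note jp = False
      show ?thesis
      proof (cases "j = p")
        case True thus ?thesis using ij before unfolding nthA'[OF jn(1)] nthA'[OF jn(2)] by simp
      next
        case False
        hence jj: "p \<le> j - 1" "j - 1 < n" using jp jn by auto
        have xj: "x < A!(j-1)" using after jj by blast
        have "A'!j = A!(j-1)" using jp False unfolding nthA'[OF jn(1)] by simp
        moreover have "A'!i \<le> A!(j-1)"
        proof (cases "i < p")
          case True
          hence "A'!i = A!i" unfolding nthA'[OF jn(2)] by simp
          thus ?thesis using mono[of i "j-1"] True jj by simp
        next
          case False
          show ?thesis
          proof (cases "i = p")
            case True thus ?thesis using xj unfolding nthA'[OF jn(2)] by simp
          next
            case False
            hence "A'!i = A!(i-1)" using \<open>\<not> i < p\<close> unfolding nthA'[OF jn(2)] by simp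
            thus ?thesis using mono[of "i-1" "j-1"] ij jj by simp
          qed
        qed
        ultimately show ?thesis by simp
      qed
    qed
  qed
  have ms': "mset A' = mset (xs @ [x])"
  proof -
    have "mset A = mset (take p A) + mset (drop p A)" by (metis append_take_drop_id mset_append)
    thus ?thesis using ms by (simp add: A'_def)
  qed
  have lH': "length H' = Suc n" using lH pn by (auto simp: H'_def n_def)
  have nthH: "\<And>k. k \<le> n \<Longrightarrow> H'!k = (if p = n then (if k < n then H!k else l)
        else if k < p then H!k else if k = p then l else if k = Suc p then r else H!(k-1))"
    using lH pn by (auto simp: H'_def n_def nth_append min_def nth_Cons' intro!: arg_cong[where f="(!) H"])
  have Hok': "\<forall>k. 0<k \<and> k<length A' \<longrightarrow> H'!k = lcp (A'!(k-1)) (A'!k)"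
  proof (intro allI impI)
    fix k assume k: "0 < k \<and> k < length A'"
    hence kn: "k \<le> n" "k - 1 \<le> n" using lA' by auto
    show "H'!k = lcp (A'!(k-1)) (A'!k)"
    proof (cases "k < p")
      case True thus ?thesis using Hok k pn unfolding nthH[OF kn(1)] nthA'[OF kn(1)] nthA'[OF kn(2)] n_def by auto
    next
      case False
      note kp = False
      show ?thesis
      proof (cases "k = p")
        case True thus ?thesis using lp k pn unfolding nthH[OF kn(1)] nthA'[OF kn(1)] nthA'[OF kn(2)] n_def by auto
      next
        case False
        hence pk: "p < k" using kp by simp
        hence pn': "p < n" using kn by simp
        show ?thesis
        proof (cases "k = Suc p")
          case True thus ?thesis using rp pn' unfolding nthH[OF kn(1)] nthA'[OF kn(1)] nthA'[OF kn(2)] by auto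
        next
          case False
          hence "Suc p < k" using pk by simp
          thus ?thesis using Hok kn pn' unfolding nthH[OF kn(1)] nthA'[OF kn(1)] nthA'[OF kn(2)] n_def
            by (auto simp: nat_diff_split)
        qed
      qed
    qed
  qed
  have LHb: "LHr A + max l r \<le> LHr A' + hb"
  proof -
    have E: "LHr A' + (if 0<p \<and> p<n then lcp (A!(p-1)) (A!p) else 0)
       = LHr A + (if 0<p then lcp (A!(p-1)) x else 0) + (if p < n then lcp x (A!p) else 0)"
      using LHr_ins[of p A x] pn unfolding A'_def n_def by simp
    show ?thesis
    proof (cases "0 < p \<and> p < n")
      case True
      have le1: "A!(p-1) \<le> x" using before True by simp
      have le2: "x \<le> A!p" using after True by auto
      have "lcp (A!(p-1)) (A!p) = min l r" using lcp_mid[OF le1 le2] lp rp True by simp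
      moreover have "LHr A' + lcp (A!(p-1)) (A!p) = LHr A + l + r" using E True lp rp by simp
      ultimately show ?thesis by (simp add: max_def min_def split: if_splits)
    next
      case False
      show ?thesis
      proof (cases "p = 0")
        case True
        show ?thesis
        proof (cases "n = 0")
          case True thus ?thesis using E \<open>p = 0\<close> l0 rn by simp
        next
          case False
          hence "LHr A' = LHr A + r" using E \<open>p = 0\<close> rp by simp
          thus ?thesis using l0 \<open>p = 0\<close> by simp
        qed
      next
        case False
        hence pn2: "p = n" "0 < p" using \<open>\<not> (0 < p \<and> p < n)\<close> pn by auto
        hence "LHr A' = LHr A + l" using E lp by simp
        thus ?thesis using rn pn2 by simp
      qed
    qed
  qed
  have cI': "2*(c + c') \<le> 2*LHr A' + Suc n * (Suc n - 1)"
  proof -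
    show ?thesis by (rule arith1[OF cI cc LHb sq_step[of n]])
  qed
  have tI': "2*(t + c' + s + 1) \<le> 2*(c + c') + Suc n * (Suc n - 1) + 4 * Suc n"
  proof -
    show ?thesis by (rule arith2[OF tI ss sq_step[of n]])
  qed
  show ?thesis unfolding res Inv_def prod.case lA'
    using srt' ms' lH' Hok'[unfolded lA'] cI' tI' by blast
qed


lemma fold_inv:
  fixes xs :: "'a::linorder list list"
  assumes "set xs \<subseteq> S" and hS: "\<forall>s\<in>S. \<forall>t\<in>S. hb \<le> lcp s t"
  shows "Inv xs (fold (insert_step hb) xs ([],[],0,0))"
  using assms(1)
proof (induction xs rule: rev_induct)
  case Nil thus ?case by (simp add: Inv_def)
next
  case (snoc x xs)
  obtain A H c t where e: "fold (insert_step hb) xs ([],[],0,0) = (A, H, c, t)"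
    by (cases "fold (insert_step hb) xs ([],[],0,0)")
  have I: "Inv xs (A, H, c, t)" using snoc e by simp
  hence "mset A = mset xs" unfolding Inv_def by simp
  hence "set A = set xs" by (metis set_mset_mset)
  hence hx: "\<forall>a\<in>set A. hb \<le> lcp x a" using snoc.prems hS by auto
  show ?case using step_inv[OF I hx] e by simp
qed

lemma take_term_eq: "k \<le> lcp a b \<Longrightarrow> take k (term_str a) = take k (term_str b)"
proof -
  assume k: "k \<le> lcp a b"
  have ka: "k \<le> length a" using k lcp_le[of a b] by simp
  have kb: "k \<le> length b" using k lcp_le[of b a] lcp_sym[of a b] by simp
  have "take k a = take k b"
  proof (rule nth_equalityI)
    show "length (take k a) = length (take k b)" using ka kb by simp
    fix j assume "j < length (take k a)"
    hence j: "j < k" using ka by simp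
    hence "chr a j = chr b j" using lcp_below[of j a b] k by simp
    thus "take k a ! j = take k b ! j" using j ka kb by (simp add: chr_def)
  qed
  thus ?thesis using ka kb by (simp add: term_str_def take_map)
qed

lemma lcp_le_dist:
  assumes "i < length ss" "j < length ss" "j \<noteq> i"
  shows "lcp (ss!j) (ss!i) \<le> dist_prefix ss i"
proof -
  define k where "k = dist_prefix ss i"
  have "k = length (ss ! i) + 1 \<or> (\<forall>j < length ss. j \<noteq> i \<longrightarrow>
          take k (term_str (ss ! i)) \<noteq> take k (term_str (ss ! j)))"
    unfolding k_def dist_prefix_def by (rule LeastI[of _ "length (ss ! i) + 1"]) simp
  thus ?thesis
  proof
    assume "k = length (ss ! i) + 1"
    thus ?thesis using lcp_le[of "ss!i" "ss!j"] lcp_sym[of "ss!i" "ss!j"] k_def by simp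
  next
    assume h: "\<forall>j < length ss. j \<noteq> i \<longrightarrow> take k (term_str (ss ! i)) \<noteq> take k (term_str (ss ! j))"
    show ?thesis
    proof (rule ccontr)
      assume "\<not> ?thesis"
      hence "k \<le> lcp (ss!i) (ss!j)" using k_def lcp_sym[of "ss!i" "ss!j"] by simp
      thus False using take_term_eq[of k "ss!i" "ss!j"] h assms by auto
    qed
  qed
qed

lemma LH_le_D: "LH (sort ss) \<le> D ss"
proof -
  define n where "n = length ss"
  have "mset (sort ss) = mset ss" by simp
  then obtain f where f: "bij_betw f {..<length (sort ss)} {..<length ss}"
      "\<forall>i<length (sort ss). sort ss ! i = ss ! (f i)"
    using permutation_Ex_bij by blast
  hence fb: "bij_betw f {..<n} {..<n}" and fn: "\<And>i. i < n \<Longrightarrow> sort ss ! i = ss ! (f i)"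
    by (auto simp: n_def)
  have "LH (sort ss) = (\<Sum>i\<in>{1..<n}. lcp (ss ! f (i-1)) (ss ! f i))"
    unfolding LH_def n_def[symmetric] length_sort
    by (rule sum.cong) (auto simp: fn)
  also have "\<dots> \<le> (\<Sum>i\<in>{1..<n}. dist_prefix ss (f i))"
  proof (rule sum_mono)
    fix i assume i: "i \<in> {1..<n}"
    have i1: "i - 1 < n" "i - 1 \<noteq> i" "i < n" using i by auto
    have ne: "f (i-1) \<noteq> f i"
    proof
      assume "f (i-1) = f i"
      hence "i - 1 = i" using inj_onD[OF bij_betw_imp_inj_on[OF fb], of "i-1" i] i1 by simp
      thus False using i1 by simp
    qed
    have r1: "f i < n" "f (i-1) < n" using bij_betwE[OF fb] i by auto
    show "lcp (ss ! f (i-1)) (ss ! f i) \<le> dist_prefix ss (f i)"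
      using lcp_le_dist[of "f i" ss "f (i-1)"] ne r1 n_def by simp
  qed
  also have "\<dots> \<le> (\<Sum>i\<in>{..<n}. dist_prefix ss (f i))" by (rule sum_mono2) auto
  also have "\<dots> = D ss" unfolding D_def n_def[symmetric] by (rule sum.reindex_bij_betw[OF fb])
  finally show ?thesis .
qed


lemma arith3: "2*(c::nat) \<le> 2*L + Q \<Longrightarrow> c \<le> L + Q div 2" by presburger

lemma arith4: "2*(t::nat) \<le> 2*c + Q + 4*n \<Longrightarrow> 2*c \<le> 2*L + Q \<Longrightarrow> L \<le> Dv \<Longrightarrow> Q + n = N2
   \<Longrightarrow> n \<le> N2 \<Longrightarrow> t \<le> 2*(Dv + N2)" by presburger

lemma sq2: "n * (n - 1) + n = (n::nat)\<^sup>2"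
  by (cases n) (simp_all add: power2_eq_square)

lemma n_le_sq: "(n::nat) \<le> n\<^sup>2"
  by (simp add: power2_eq_square le_square)

lemma main_inv:
  fixes ss :: "'a::linorder list list"
  assumes "\<forall>s\<in>set ss. \<forall>t\<in>set ss. hb \<le> lcp s t"
  shows "Inv ss (fold (insert_step hb) ss ([],[],0,0))"
  by (rule fold_inv[OF subset_refl assms])

theorem mainTheorem6:
  shows "(\<forall>(ss :: 'a::linorder list list) hb.
            (\<forall>s\<in>set ss. \<forall>t\<in>set ss. hb \<le> lcp s t) \<longrightarrow>
            (case lcp_isort hb ss of (A, H, c, t) \<Rightarrow>
               A = sort ss
             \<and> length H = length ss
             \<and> (ss \<noteq> [] \<longrightarrow> H ! 0 = None)
             \<and> (\<forall>i. 0 < i \<and> i < length ss \<longrightarrow> H ! i = Some (lcp (A ! (i - 1)) (A ! i)))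
             \<and> c \<le> LH A + length ss * (length ss - 1) div 2))
       \<and> (\<exists>C :: nat. \<forall>(ss :: 'a list list) hb.
            (\<forall>s\<in>set ss. \<forall>t\<in>set ss. hb \<le> lcp s t) \<longrightarrow>
            snd (snd (snd (lcp_isort hb ss))) \<le> C * (D ss + (length ss)\<^sup>2))"
proof (intro conjI allI impI)
  fix ss :: "'a list list" and hb
  assume h: "\<forall>s\<in>set ss. \<forall>t\<in>set ss. hb \<le> lcp s t"
  obtain A H c t where e: "fold (insert_step hb) ss ([],[],0,0) = (A, H, c, t)"
    by (cases "fold (insert_step hb) ss ([],[],0,0)")
  have I: "Inv ss (A, H, c, t)" using main_inv[OF h] e by simp
  hence srt: "sorted A" and ms: "mset A = mset ss" and lH: "length H = length A"
    and Hok: "\<forall>k. 0<k \<and> k<length A \<longrightarrow> H!k = lcp (A!(k-1)) (A!k)"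
    and cI: "2*c \<le> 2*LHr A + length A * (length A - 1)"
    by (auto simp: Inv_def)
  have As: "A = sort ss" using properties_for_sort[OF ms srt] by simp
  have lA: "length A = length ss" using ms by (metis size_mset)
  define H2 where "H2 = (case H of [] \<Rightarrow> [] | _ # H' \<Rightarrow> None # map Some H')"
  have li: "lcp_isort hb ss = (A, H2, c, t)" unfolding lcp_isort_def e H2_def by simp
  have lH2: "length H2 = length ss" using lH lA by (cases H) (auto simp: H2_def)
  have H20: "ss \<noteq> [] \<longrightarrow> H2 ! 0 = None" using lH lA by (cases H) (auto simp: H2_def)
  have H2i: "\<forall>i. 0 < i \<and> i < length ss \<longrightarrow> H2 ! i = Some (lcp (A ! (i - 1)) (A ! i))"
  proof (intro allI impI)
    fix i assume i: "0 < i \<and> i < length ss"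
    then obtain h0 H' where H: "H = h0 # H'" using lH lA by (cases H) auto
    have "H2 ! i = Some (H ! i)" using i H lH lA by (cases i) (auto simp: H2_def)
    thus "H2 ! i = Some (lcp (A ! (i - 1)) (A ! i))" using Hok i lA by simp
  qed
  have cb: "c \<le> LH A + length ss * (length ss - 1) div 2"
    using arith3[OF cI] LH_eq[of A] lA by simp
  show "case lcp_isort hb ss of (A, H, c, t) \<Rightarrow>
               A = sort ss
             \<and> length H = length ss
             \<and> (ss \<noteq> [] \<longrightarrow> H ! 0 = None)
             \<and> (\<forall>i. 0 < i \<and> i < length ss \<longrightarrow> H ! i = Some (lcp (A ! (i - 1)) (A ! i)))
             \<and> c \<le> LH A + length ss * (length ss - 1) div 2"
    unfolding li prod.case using As lH2 H20 H2i cb by blast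
next
  show "\<exists>C :: nat. \<forall>(ss :: 'a list list) hb.
            (\<forall>s\<in>set ss. \<forall>t\<in>set ss. hb \<le> lcp s t) \<longrightarrow>
            snd (snd (snd (lcp_isort hb ss))) \<le> C * (D ss + (length ss)\<^sup>2)"
  proof (intro exI allI impI)
    fix ss :: "'a list list" and hb
    assume h: "\<forall>s\<in>set ss. \<forall>t\<in>set ss. hb \<le> lcp s t"
    obtain A H c t where e: "fold (insert_step hb) ss ([],[],0,0) = (A, H, c, t)"
      by (cases "fold (insert_step hb) ss ([],[],0,0)")
    have I: "Inv ss (A, H, c, t)" using main_inv[OF h] e by simp
    hence srt: "sorted A" and ms: "mset A = mset ss"
      and cI: "2*c \<le> 2*LHr A + length A * (length A - 1)"
      and tI: "2*t \<le> 2*c + length A * (length A - 1) + 4 * length A"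
      by (auto simp: Inv_def)
    have As: "A = sort ss" using properties_for_sort[OF ms srt] by simp
    have lA: "length A = length ss" using ms by (metis size_mset)
    have tt: "snd (snd (snd (lcp_isort hb ss))) = t"
      unfolding lcp_isort_def e by (simp split: list.split)
    have LD: "LHr A \<le> D ss" using LH_le_D[of ss] LH_eq[of A] As by simp
    show "snd (snd (snd (lcp_isort hb ss))) \<le> 2 * (D ss + (length ss)\<^sup>2)"
      unfolding tt using arith4[OF tI cI LD sq2 n_le_sq] lA by simp
  qed
qed

end
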